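(* The set $\mathbb{I}$ of intervals of $\mathbb{F}$ is closed under intersections: if $I,J\in\mathbb{I}$ then $I\cap J\in\mathbb{I}$.
   Context: $\mathbb{F}$ is the free group on generators $a,b$ with identity $e$. For $n=4k+i$ with $k\in\mathbb{N}$ and $0\le i<4$, set $\ell_n=a,a^{-1},b,b^{-1}$ according as $i=0,1,2,3$. For $g\in\mathbb{F}$ and $S\subseteq\mathbb{F}$ let $gS=\{gs:s\in S\}$. Define $I_0=\{e\}$ and $I_{n+1}=I_n\cup\ell_nI_n$. An interval of $\mathbb{F}$ is either the empty set or a set of the form $wI_n$ with $w\in\mathbb{F}$, $n\in\mathbb{N}$; $\mathbb{I}$ denotes the set of intervals. *)

theory Defs
  imports Main
begin

text \<open>The free group F on generators a, b, modelled as reduced words.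
A letter is a pair (g, s): g = False means generator a, g = True means b;
s = True means the inverse of the generator.\<close>

type_synonym letter = "bool \<times> bool"

definition inv_letter :: "letter \<Rightarrow> letter" where
  "inv_letter x = (fst x, \<not> snd x)"

fun reduced :: "letter list \<Rightarrow> bool" where
  "reduced [] = True"
| "reduced [x] = True"
| "reduced (x # y # ys) = (y \<noteq> inv_letter x \<and> reduced (y # ys))"

fun cons_red :: "letter \<Rightarrow> letter list \<Rightarrow> letter list" where
  "cons_red x [] = [x]"
| "cons_red x (y # ys) = (if y = inv_letter x then ys else x # y # ys)"

definition normalize :: "letter list \<Rightarrow> letter list" where
  "normalize w = foldr cons_red w []"

definition FG :: "letter list set" where
  "FG = {w. reduced w}"

definition fg_e :: "letter list" where
  "fg_e = []"

definition fg_mult :: "letter list \<Rightarrow> letter list \<Rightarrow> letter list" where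
  "fg_mult g h = normalize (g @ h)"

definition gen_a :: "letter list" where "gen_a = [(False, False)]"
definition gen_a_inv :: "letter list" where "gen_a_inv = [(False, True)]"
definition gen_b :: "letter list" where "gen_b = [(True, False)]"
definition gen_b_inv :: "letter list" where "gen_b_inv = [(True, True)]"

definition ell :: "nat \<Rightarrow> letter list" where
  "ell n = (if n mod 4 = 0 then gen_a else if n mod 4 = 1 then gen_a_inv
            else if n mod 4 = 2 then gen_b else gen_b_inv)"

definition lmult :: "letter list \<Rightarrow> letter list set \<Rightarrow> letter list set" where
  "lmult g S = (\<lambda>s. fg_mult g s) ` S"

fun Iv :: "nat \<Rightarrow> letter list set" where
  "Iv 0 = {fg_e}"
| "Iv (Suc n) = Iv n \<union> lmult (ell n) (Iv n)"

definition intervals :: "letter list set set" where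
  "intervals = {{}} \<union> {lmult w (Iv n) | w n. w \<in> FG}"

end

theory Submission
  imports Defs
begin

lemma inv_inv[simp]: "inv_letter (inv_letter x) = x"
  by (cases x) (simp add: inv_letter_def)

lemma inv_neq[simp]: "inv_letter x \<noteq> x"
  by (cases x) (simp add: inv_letter_def)

lemma inv_neq'[simp]: "x \<noteq> inv_letter x"
  by (cases x) (simp add: inv_letter_def)

lemma inv_eq_iff[simp]: "inv_letter x = inv_letter y \<longleftrightarrow> x = y"
  by (metis inv_inv)

lemma reduced_tl: "reduced (y # ys) \<Longrightarrow> reduced ys"
  by (cases ys) auto

lemma cons_red_reduced: "reduced r \<Longrightarrow> reduced (cons_red x r)"
  by (cases r) (auto dest: reduced_tl)

lemma cancel: "reduced R \<Longrightarrow> cons_red (inv_letter x) (cons_red x R) = R"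
proof (cases R)
  case Nil thus ?thesis by simp
next
  case (Cons y ys)
  assume r: "reduced R"
  show ?thesis
  proof (cases "y = inv_letter x")
    case True
    then show ?thesis using r Cons by (cases ys) auto
  next
    case False
    then show ?thesis using Cons by auto
  qed
qed

definition ginv :: "letter list \<Rightarrow> letter list" where
  "ginv w = rev (map inv_letter w)"

lemma ginv_Nil[simp]: "ginv [] = []" by (simp add: ginv_def)
lemma ginv_Cons[simp]: "ginv (x # xs) = ginv xs @ [inv_letter x]" by (simp add: ginv_def)
lemma ginv_append[simp]: "ginv (a @ b) = ginv b @ ginv a" by (simp add: ginv_def)
lemma ginv_ginv[simp]: "ginv (ginv a) = a" by (simp add: ginv_def rev_map comp_def)

lemma F1: "reduced r \<Longrightarrow> reduced (foldr cons_red a r)"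
  by (induction a) (auto intro: cons_red_reduced)

lemma F3: "reduced r \<Longrightarrow> foldr cons_red (ginv a) (foldr cons_red a r) = r"
proof (induction a)
  case Nil thus ?case by simp
next
  case (Cons x a)
  have "reduced (foldr cons_red a r)" using Cons.prems by (rule F1)
  then show ?case using Cons by (simp add: cancel)
qed

lemma F3': "reduced r \<Longrightarrow> foldr cons_red a (foldr cons_red (ginv a) r) = r"
  using F3[of r "ginv a"] by simp

lemma normalize_append: "normalize (a @ b) = foldr cons_red a (normalize b)"
  by (simp add: normalize_def)

lemma normalize_Cons: "normalize (x # a) = cons_red x (normalize a)"
  by (simp add: normalize_def)

lemma normalize_reduced[simp]: "reduced (normalize a)"
  unfolding normalize_def by (rule F1) simp

lemma N1: "reduced w \<Longrightarrow> normalize w = w"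
proof (induction w)
  case Nil thus ?case by (simp add: normalize_def)
next
  case (Cons x w)
  then have "normalize w = w" using reduced_tl by blast
  then show ?case using Cons.prems by (cases w) (auto simp: normalize_Cons)
qed

lemma F2': "reduced nn \<Longrightarrow> reduced r \<Longrightarrow>
   foldr cons_red (cons_red x nn) r = cons_red x (foldr cons_red nn r)"
proof (cases nn)
  case Nil thus ?thesis by simp
next
  case (Cons y ys)
  assume a: "reduced nn" "reduced r"
  show ?thesis
  proof (cases "y = inv_letter x")
    case True
    have "reduced (foldr cons_red ys r)" using a Cons by (intro F1) auto
    then show ?thesis using Cons True cancel[of _ "inv_letter x"] by simp
  next
    case False thus ?thesis using Cons by simp
  qed
qed

lemma F2: "reduced r \<Longrightarrow> foldr cons_red (normalize a) r = foldr cons_red a r"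
proof (induction a)
  case Nil thus ?case by (simp add: normalize_def)
next
  case (Cons x a)
  then show ?case by (simp add: normalize_Cons F2')
qed

lemma act_app: "reduced (p @ q) \<Longrightarrow> foldr cons_red p q = p @ q"
proof -
  assume r: "reduced (p @ q)"
  have "reduced q"
    using r by (induction p) (auto dest: reduced_tl)
  then have "foldr cons_red p q = foldr cons_red p (normalize q)" by (simp add: N1)
  also have "\<dots> = normalize (p @ q)" by (simp add: normalize_append)
  also have "\<dots> = p @ q" using r by (simp add: N1)
  finally show ?thesis .
qed

lemma lmult_mem:
  assumes "S \<subseteq> {x. reduced x}"
  shows "x \<in> lmult w S \<longleftrightarrow> reduced x \<and> foldr cons_red (ginv w) x \<in> S"
proof
  assume "x \<in> lmult w S"
  then obtain s where s: "s \<in> S" "x = normalize (w @ s)"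
    by (auto simp: lmult_def fg_mult_def)
  have rs: "reduced s" using s assms by auto
  have "x = foldr cons_red w s" using s rs by (simp add: normalize_append N1)
  then show "reduced x \<and> foldr cons_red (ginv w) x \<in> S"
    using s rs F3 F1 by simp
next
  assume a: "reduced x \<and> foldr cons_red (ginv w) x \<in> S"
  define s where "s = foldr cons_red (ginv w) x"
  have rs: "reduced s" using a s_def F1 by auto
  have "fg_mult w s = x"
    using rs a F3'[of x w] by (simp add: fg_mult_def normalize_append N1 s_def)
  then show "x \<in> lmult w S" using a s_def unfolding lmult_def by force
qed

lemma ginv_norm:
  assumes "reduced z"
  shows "foldr cons_red (ginv (normalize a)) z = foldr cons_red (ginv a) z"
proof -
  define Z where "Z = foldr cons_red (ginv a) z"
  have rZ: "reduced Z" using assms Z_def F1 by auto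
  have "z = foldr cons_red a Z" using F3'[OF assms] Z_def by simp
  also have "\<dots> = foldr cons_red (normalize a) Z" using F2[OF rZ] by simp
  finally have "foldr cons_red (ginv (normalize a)) z = Z"
    using F3[OF rZ, of "normalize a"] by simp
  then show ?thesis using Z_def by simp
qed

lemma lmult_lmult: "lmult w (lmult c S) = lmult (normalize (w @ c)) S"
proof -
  have "normalize (w @ normalize (c @ s)) = normalize (normalize (w @ c) @ s)" for s
  proof -
    have "normalize (w @ normalize (c @ s)) = foldr cons_red w (normalize (c @ s))"
      by (metis normalize_append N1 normalize_reduced)
    also have "\<dots> = foldr cons_red (w @ c) (normalize s)" by (simp add: normalize_append N1 F1)
    also have "\<dots> = foldr cons_red (normalize (w @ c)) (normalize s)" by (simp add: F2)
    also have "\<dots> = normalize (normalize (w @ c) @ s)" by (simp add: normalize_append)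
    finally show ?thesis .
  qed
  then show ?thesis unfolding lmult_def fg_mult_def image_image by simp
qed


definition lt :: "nat \<Rightarrow> letter" where
  "lt n = (2 \<le> n mod 4, n mod 4 = 1 \<or> n mod 4 = 3)"

lemma ell_lt: "ell n = [lt n]"
proof -
  have "n mod 4 < 4" by simp
  then have "n mod 4 = 0 \<or> n mod 4 = 1 \<or> n mod 4 = 2 \<or> n mod 4 = 3" by linarith
  then show ?thesis
    by (auto simp: ell_def lt_def gen_a_def gen_a_inv_def gen_b_def gen_b_inv_def)
qed

fun prev :: "letter \<Rightarrow> nat \<Rightarrow> nat option" where
  "prev s 0 = None"
| "prev s (Suc j) = (if lt j = s then Some j else prev s j)"

lemma P1: "prev s j = Some t \<Longrightarrow> t < j \<and> lt t = s \<and> (\<forall>u. t < u \<and> u < j \<longrightarrow> lt u \<noteq> s)"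
proof (induction j)
  case 0 thus ?case by simp
next
  case (Suc j)
  then show ?case by (auto split: if_splits simp: less_Suc_eq)
qed

lemma P_mono: "k \<le> j \<Longrightarrow> prev s k = Some t \<Longrightarrow> \<exists>t'. prev s j = Some t' \<and> t \<le> t'"
proof (induction j)
  case 0 thus ?case by simp
next
  case (Suc j)
  show ?case
  proof (cases "k = Suc j")
    case True thus ?thesis using Suc by auto
  next
    case False
    then obtain t' where t': "prev s j = Some t'" "t \<le> t'" using Suc by auto
    have "t' < j" using P1[OF t'(1)] by simp
    then show ?thesis using t' by auto
  qed
qed

lemma P_transfer: "k \<le> j \<Longrightarrow> (\<forall>t. prev s j = Some t \<longrightarrow> t < k) \<Longrightarrow> prev s k = prev s j"
proof (induction j)
  case 0 thus ?case by simp
next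
  case (Suc j)
  show ?case
  proof (cases "k = Suc j")
    case True thus ?thesis by simp
  next
    case False
    then have kj: "k \<le> j" using Suc by simp
    show ?thesis
    proof (cases "lt j = s")
      case True thus ?thesis using Suc.prems kj by auto
    next
      case False thus ?thesis using Suc kj by auto
    qed
  qed
qed

fun emb :: "nat \<Rightarrow> letter list \<Rightarrow> nat option" where
  "emb k [] = Some k"
| "emb k (x # xs) = (case prev x k of None \<Rightarrow> None | Some j \<Rightarrow> emb j xs)"

lemma emb_append: "emb k (xs @ ys) = (case emb k xs of None \<Rightarrow> None | Some j \<Rightarrow> emb j ys)"
  by (induction xs arbitrary: k) (auto split: option.split)

lemma emb_snoc: "emb k (xs @ [x]) = (case emb k xs of None \<Rightarrow> None | Some j \<Rightarrow> prev x j)"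
  by (simp add: emb_append split: option.split)

lemma emb_mono: "k \<le> k' \<Longrightarrow> emb k xs = Some p \<Longrightarrow> \<exists>p'. emb k' xs = Some p' \<and> p \<le> p'"
proof (induction xs arbitrary: k k' p)
  case Nil thus ?case by simp
next
  case (Cons x xs)
  from Cons.prems obtain j where j: "prev x k = Some j" "emb j xs = Some p"
    by (auto split: option.splits)
  obtain j' where j': "prev x k' = Some j'" "j \<le> j'" using P_mono[OF Cons.prems(1) j(1)] by blast
  show ?case using Cons.IH[OF j'(2) j(2)] j' by simp
qed

lemma emb_mono': "k \<le> k' \<Longrightarrow> emb k xs \<noteq> None \<Longrightarrow> emb k' xs \<noteq> None"
  using emb_mono by blast

lemma E_min: "(emb a y \<noteq> None \<and> emb b y \<noteq> None) \<longleftrightarrow> emb (min a b) y \<noteq> None"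
  by (metis emb_mono' min.cobounded1 min.cobounded2 min_def)

lemma Iv_char: "Iv n = {g. reduced g \<and> emb n g \<noteq> None}"
proof (induction n)
  case 0
  show ?case
  proof (intro set_eqI iffI)
    fix g assume "g \<in> Iv 0" thus "g \<in> {g. reduced g \<and> emb 0 g \<noteq> None}" by (simp add: fg_e_def)
  next
    fix g assume "g \<in> {g. reduced g \<and> emb 0 g \<noteq> None}"
    thus "g \<in> Iv 0" by (cases g) (auto simp: fg_e_def)
  qed
next
  case (Suc n)
  have lm: "lmult (ell n) (Iv n) = (\<lambda>g. cons_red (lt n) g) ` Iv n"
  proof -
    have "fg_mult (ell n) g = cons_red (lt n) g" if "g \<in> Iv n" for g
      using that Suc by (simp add: fg_mult_def ell_lt normalize_Cons N1)
    then show ?thesis unfolding lmult_def by (rule image_cong[OF refl])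
  qed
  show ?case
  proof (intro set_eqI iffI)
    fix g assume "g \<in> Iv (Suc n)"
    then have "g \<in> Iv n \<or> g \<in> (\<lambda>g. cons_red (lt n) g) ` Iv n" using lm by auto
    then show "g \<in> {g. reduced g \<and> emb (Suc n) g \<noteq> None}"
    proof
      assume "g \<in> Iv n" thus ?thesis using Suc emb_mono'[of n "Suc n"] by auto
    next
      assume "g \<in> (\<lambda>g. cons_red (lt n) g) ` Iv n"
      then obtain h where h: "h \<in> Iv n" "g = cons_red (lt n) h" by auto
      have rh: "reduced h" "emb n h \<noteq> None" using h Suc by auto
      show ?thesis
      proof (cases h)
        case Nil thus ?thesis using h by simp
      next
        case (Cons y ys)
        show ?thesis
        proof (cases "y = inv_letter (lt n)")
          case True
          obtain j where j: "prev y n = Some j" "emb j ys \<noteq> None"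
            using rh(2) Cons by (auto split: option.splits)
          have "j \<le> Suc n" using P1[OF j(1)] by simp
          then have "emb (Suc n) ys \<noteq> None" using emb_mono'[of j "Suc n" ys] j(2) by blast
          moreover have "g = ys" using h(2) Cons True by simp
          moreover have "reduced ys" using rh(1) Cons reduced_tl by blast
          ultimately show ?thesis by simp
        next
          case False
          then have "g = lt n # h" using Cons h(2) by simp
          moreover have "reduced (lt n # h)" using rh(1) Cons False by simp
          moreover have "emb (Suc n) (lt n # h) = emb n h" by simp
          ultimately show ?thesis using rh(2) by simp
        qed
      qed
    qed
  next
    fix g assume g: "g \<in> {g. reduced g \<and> emb (Suc n) g \<noteq> None}"
    show "g \<in> Iv (Suc n)"
    proof (cases g)
      case Nil thus ?thesis using Suc by simp
    next
      case (Cons x xs)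
      show ?thesis
      proof (cases "x = lt n")
        case True
        have "reduced (x # xs)" using g Cons by simp
        then have xs1: "reduced xs" by (rule reduced_tl)
        have xs: "reduced xs" "emb n xs \<noteq> None" using xs1 g Cons True by auto
        have "cons_red (lt n) xs = g"
          using g Cons True by (cases xs) auto
        then have "g \<in> (\<lambda>g. cons_red (lt n) g) ` Iv n" using xs Suc by force
        then show ?thesis using lm by simp
      next
        case False
        then have "emb n g \<noteq> None" using g Cons by auto
        then show ?thesis using Suc g by simp
      qed
    qed
  qed
qed


lemma reduced_append:
  "reduced (xs @ ys) \<longleftrightarrow> reduced xs \<and> reduced ys \<and> (xs \<noteq> [] \<longrightarrow> ys \<noteq> [] \<longrightarrow> hd ys \<noteq> inv_letter (last xs))"
proof (induction xs rule: reduced.induct)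
  case 1 thus ?case by simp
next
  case (2 x) thus ?case by (cases ys) auto
next
  case (3 x y zs) thus ?case by auto
qed

lemma ginv_Nil_iff[simp]: "ginv d = [] \<longleftrightarrow> d = []"
  by (simp add: ginv_def)

lemma last_ginv: "d \<noteq> [] \<Longrightarrow> last (ginv d) = inv_letter (hd d)"
  by (cases d) (auto simp: ginv_def)

lemma reduced_ginv: "reduced d \<Longrightarrow> reduced (ginv d)"
proof (induction d)
  case Nil thus ?case by simp
next
  case (Cons x d)
  have rd: "reduced d" using Cons.prems reduced_tl by blast
  have "d \<noteq> [] \<Longrightarrow> hd d \<noteq> inv_letter x" using Cons.prems by (cases d) auto
  then show ?case using Cons.IH[OF rd] by (auto simp: reduced_append last_ginv)
qed

lemma reduced_take: "reduced g \<Longrightarrow> reduced (take i g)"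
  using reduced_append[of "take i g" "drop i g"] by simp

lemma reduced_drop: "reduced g \<Longrightarrow> reduced (drop i g)"
  using reduced_append[of "take i g" "drop i g"] by simp

lemma cancel_prefix: "reduced (c @ w) \<Longrightarrow> foldr cons_red (ginv c) (c @ w) = w"
proof -
  assume r: "reduced (c @ w)"
  have rw: "reduced w" using r reduced_append by blast
  have "c @ w = foldr cons_red c w" using act_app[OF r] by simp
  then show ?thesis using F3[OF rw, of c] by simp
qed

fun lcp :: "'a list \<Rightarrow> 'a list \<Rightarrow> nat" where
  "lcp (x # xs) (y # ys) = (if x = y then Suc (lcp xs ys) else 0)"
| "lcp _ _ = 0"

lemma lcp_le1: "lcp xs ys \<le> length xs"
  by (induction xs ys rule: lcp.induct) auto

lemma lcp_le2: "lcp xs ys \<le> length ys"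
  by (induction xs ys rule: lcp.induct) auto

lemma lcp_take: "take (lcp xs ys) xs = take (lcp xs ys) ys"
  by (induction xs ys rule: lcp.induct) auto

lemma lcp_nth: "lcp xs ys < length xs \<Longrightarrow> lcp xs ys < length ys \<Longrightarrow> xs ! lcp xs ys \<noteq> ys ! lcp xs ys"
  by (induction xs ys rule: lcp.induct) auto

lemma right_first:
  assumes b: "prev (inv_letter s) b1 = Some b0" and k: "k = min a0 b0"
    and mx: "\<forall>a1. prev s a0 = Some a1 \<longrightarrow> min a1 b1 \<le> k"
  shows "prev s k = prev s a0 \<and> (\<forall>a1. prev s a0 = Some a1 \<longrightarrow> a1 < k)"
proof -
  have b': "b0 < b1" "lt b0 = inv_letter s" using P1[OF b] by auto
  have lt: "a1 < k" if a1: "prev s a0 = Some a1" for a1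
  proof -
    have a': "a1 < a0" "lt a1 = s" using P1[OF a1] by auto
    have "min a1 b1 \<le> k" using mx a1 by blast
    then have "a1 \<le> k" using k b' by linarith
    moreover have "a1 \<noteq> k"
    proof
      assume "a1 = k"
      then have "k = b0" using k a' by linarith
      then show False using b' a' \<open>a1 = k\<close> by simp
    qed
    ultimately show ?thesis by simp
  qed
  have "prev s k = prev s a0"
    using lt by (intro P_transfer) (auto simp: k)
  then show ?thesis using lt by blast
qed


lemma main:
  fixes n m :: nat
  assumes g: "reduced g"
  defines "T \<equiv> {z. reduced z \<and> emb n z \<noteq> None \<and> emb m (foldr cons_red (ginv g) z) \<noteq> None}"
  shows "T = {} \<or> (\<exists>c k. reduced c \<and> T = lmult c (Iv k))"
proof -
  define N where "N = length g"
  define A where "A i = emb n (take i g)" for i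
  define B where "B i = emb m (ginv (drop i g))" for i
  define M where "M i = (case A i of None \<Rightarrow> None | Some a \<Rightarrow>
       (case B i of None \<Rightarrow> None | Some b \<Rightarrow> Some (min a b)))" for i
  have A_step: "A (Suc i) = (case A i of None \<Rightarrow> None | Some a \<Rightarrow> prev (g!i) a)" if "i < N" for i
    using that unfolding A_def N_def by (simp add: take_Suc_conv_app_nth emb_snoc)
  have B_step: "B i = (case B (Suc i) of None \<Rightarrow> None | Some b \<Rightarrow> prev (inv_letter (g!i)) b)"
    if "i < N" for i
  proof -
    have "drop i g = g!i # drop (Suc i) g" using that N_def by (simp add: Cons_nth_drop_Suc)
    then show ?thesis unfolding B_def by (simp add: emb_snoc)
  qed
  have key_T: "z \<in> T \<longleftrightarrow> (\<exists>p. M (lcp z g) = Some p \<and> emb p (drop (lcp z g) z) \<noteq> None)"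
    if rz: "reduced z" for z
  proof -
    define i where "i = lcp z g"
    define y where "y = drop i z"
    define c where "c = take i g"
    define d where "d = drop i g"
    have zc: "z = c @ y"
    proof -
      have "z = take i z @ drop i z" by simp
      also have "take i z = c" unfolding c_def i_def by (rule lcp_take)
      finally show ?thesis by (simp add: y_def)
    qed
    have gcd: "g = c @ d" unfolding c_def d_def by simp
    have ry: "reduced y" using rz y_def reduced_drop by blast
    have rd: "reduced d" using g d_def reduced_drop by blast
    have heads: "hd y \<noteq> hd d" if "y \<noteq> []" "d \<noteq> []"
    proof -
      have "i < length z" using that y_def by simp
      moreover have "i < length g" using that d_def by simp
      ultimately show ?thesis using lcp_nth[of z g] i_def y_def d_def by (simp add: hd_drop_conv_nth)
    qed
    have e1: "emb n z = (case A i of None \<Rightarrow> None | Some a \<Rightarrow> emb a y)"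
      by (simp add: zc A_def c_def emb_append)
    have "foldr cons_red (ginv g) z = foldr cons_red (ginv d) (foldr cons_red (ginv c) (c @ y))"
      using zc gcd by (metis foldr_append ginv_append)
    also have "\<dots> = foldr cons_red (ginv d) y" 
    proof -
      have "reduced (c @ y)" using rz zc by simp
      then show ?thesis by (simp add: cancel_prefix)
    qed
    also have "\<dots> = ginv d @ y"
    proof (rule act_app)
      show "reduced (ginv d @ y)" using reduced_ginv[OF rd] ry heads last_ginv
        by (auto simp: reduced_append)
    qed
    finally have e2: "emb m (foldr cons_red (ginv g) z) = (case B i of None \<Rightarrow> None | Some b \<Rightarrow> emb b y)"
      by (simp add: B_def d_def emb_append)
    have "z \<in> T \<longleftrightarrow> emb n z \<noteq> None \<and> emb m (foldr cons_red (ginv g) z) \<noteq> None"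
      unfolding T_def using rz by simp
    also have "\<dots> \<longleftrightarrow> (\<exists>p. M i = Some p \<and> emb p y \<noteq> None)"
    proof (cases "A i")
      case None thus ?thesis using e1 by (simp add: M_def)
    next
      case (Some a)
      show ?thesis
      proof (cases "B i")
        case None thus ?thesis using e2 Some by (simp add: M_def)
      next
        case (Some b)
        thus ?thesis using e1 e2 \<open>A i = Some a\<close> E_min[of a y b] by (simp add: M_def)
      qed
    qed
    finally show ?thesis by (simp add: i_def y_def)
  qed
  show ?thesis
  proof (cases "T = {}")
    case True thus ?thesis by simp
  next
    case False
    then obtain z0 where z0: "z0 \<in> T" by blast
    have rz0: "reduced z0" using z0 T_def by simp
    define Q where "Q = {p. \<exists>i\<le>N. M i = Some p}"
    have "Q \<subseteq> (\<lambda>i. the (M i)) ` {..N}" unfolding Q_def by force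
    then have Qfin: "finite Q" by (rule finite_surj[OF finite_atMost])
    have "lcp z0 g \<le> N" using lcp_le2 N_def by simp
    then have Qne: "Q \<noteq> {}" using key_T[OF rz0] z0 Q_def by blast
    define k where "k = Max Q"
    have "k \<in> Q" unfolding k_def using Max_in[OF Qfin Qne] .
    then obtain i0 where i0: "i0 \<le> N" "M i0 = Some k" unfolding Q_def by blast
    have amax: "q \<le> k" if "i \<le> N" "M i = Some q" for i q
    proof -
      have "q \<in> Q" unfolding Q_def using that by blast
      then show ?thesis unfolding k_def using Max_ge[OF Qfin] by blast
    qed
    obtain a0 b0 where ab0: "A i0 = Some a0" "B i0 = Some b0" "k = min a0 b0"
      using i0(2) unfolding M_def by (auto split: option.splits)
    define R where "R i = emb k (drop i0 (take i g))" for i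
    define L where "L i = emb k (ginv (drop i (take i0 g)))" for i
    have R_step: "R (Suc i) = (case R i of None \<Rightarrow> None | Some a \<Rightarrow> prev (g!i) a)"
      if "i0 \<le> i" "i < N" for i
      using that unfolding R_def N_def by (simp add: take_Suc_conv_app_nth emb_snoc)
    have L_step: "L i = (case L (Suc i) of None \<Rightarrow> None | Some b \<Rightarrow> prev (inv_letter (g!i)) b)"
      if "i < i0" for i
    proof -
      have "drop i (take i0 g) = take i0 g ! i # drop (Suc i) (take i0 g)"
        using that i0(1) N_def Cons_nth_drop_Suc[of i "take i0 g"] by simp
      then show ?thesis unfolding L_def using that by (simp add: emb_snoc)
    qed
    have Rc: "R i = M i \<and> (\<exists>b. B i = Some b \<and> k \<le> b) \<and>
              (i0 < i \<longrightarrow> R i = A i \<and> (\<forall>a. A i = Some a \<longrightarrow> a < k))"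
      if "i0 \<le> i" "i \<le> N" for i
      using that(1,2)
    proof (induction i rule: dec_induct)
      case base
      then show ?case using ab0 i0 by (simp add: R_def)
    next
      case (step j)
      have jN: "j < N" using step by simp
      obtain b where b: "B j = Some b" "k \<le> b" using step.IH step.prems by auto
      obtain b' where b': "B (Suc j) = Some b'" "prev (inv_letter (g!j)) b' = Some b"
        using B_step[OF jN] b(1) by (auto split: option.splits)
      have bb: "b < b'" using P1[OF b'(2)] by simp
      have RA: "R (Suc j) = A (Suc j) \<and> (\<forall>a. A (Suc j) = Some a \<longrightarrow> a < k)"
      proof (cases "j = i0")
        case True
        have mx: "\<forall>a1. prev (g!j) a0 = Some a1 \<longrightarrow> min a1 b' \<le> k"
        proof (intro allI impI)
          fix a1 assume "prev (g!j) a0 = Some a1"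
          then have "M (Suc j) = Some (min a1 b')"
            using A_step[OF jN] ab0 True b' by (simp add: M_def)
          then show "min a1 b' \<le> k" using amax step by auto
        qed
        have "b = b0" using b ab0 True by simp
        have rf: "prev (g!j) k = prev (g!j) a0 \<and> (\<forall>a1. prev (g!j) a0 = Some a1 \<longrightarrow> a1 < k)"
          by (rule right_first[OF _ ab0(3) mx]) (use b' \<open>b = b0\<close> in simp)
        have "R (Suc j) = prev (g!j) k" using R_step[of j] True jN by (simp add: R_def)
        moreover have "A (Suc j) = prev (g!j) a0" using A_step[OF jN] True ab0 by simp
        ultimately show ?thesis using rf by simp
      next
        case False
        then have ij: "i0 < j" using step by simp
        then have RAj: "R j = A j" "\<forall>a. A j = Some a \<longrightarrow> a < k" using step.IH jN by auto
        have "R (Suc j) = A (Suc j)" using R_step[of j] A_step[OF jN] step RAj by simp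
        moreover have "\<forall>a. A (Suc j) = Some a \<longrightarrow> a < k"
        proof (intro allI impI)
          fix a assume "A (Suc j) = Some a"
          then obtain a' where "A j = Some a'" "prev (g!j) a' = Some a"
            using A_step[OF jN] by (auto split: option.splits)
          then show "a < k" using RAj P1 by fastforce
        qed
        ultimately show ?thesis by blast
      qed
      have "M (Suc j) = A (Suc j)"
      proof (cases "A (Suc j)")
        case None thus ?thesis by (simp add: M_def)
      next
        case (Some a)
        then have "a < k" using RA by blast
        then show ?thesis using Some b'(1) b(2) bb by (simp add: M_def)
      qed
      then show ?case using RA b' b bb by auto
    qed
    have Lc: "L i = M i \<and> (\<exists>a. A i = Some a \<and> k \<le> a) \<and>
              (i < i0 \<longrightarrow> L i = B i \<and> (\<forall>b. B i = Some b \<longrightarrow> b < k))"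
      if "i \<le> i0" for i
      using that
    proof (induction i rule: inc_induct)
      case base
      then show ?case using ab0 i0 by (simp add: L_def)
    next
      case (step j)
      have jN: "j < N" using step i0 by simp
      obtain a where a: "A (Suc j) = Some a" "k \<le> a" using step.IH by auto
      obtain a' where a': "A j = Some a'" "prev (g!j) a' = Some a"
        using A_step[OF jN] a(1) by (auto split: option.splits)
      have aa: "a < a'" using P1[OF a'(2)] by simp
      have LB: "L j = B j \<and> (\<forall>b. B j = Some b \<longrightarrow> b < k)"
      proof (cases "Suc j = i0")
        case True
        have "a = a0" using a ab0 True by simp
        have mx: "\<forall>b1. prev (inv_letter (g!j)) b0 = Some b1 \<longrightarrow> min b1 a' \<le> k"
        proof (intro allI impI)
          fix b1 assume "prev (inv_letter (g!j)) b0 = Some b1"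
          then have "M j = Some (min a' b1)"
            using B_step[OF jN] ab0 True a' by (simp add: M_def)
          then have "min a' b1 \<le> k" using amax[of j] jN by simp
          then show "min b1 a' \<le> k" by (simp add: min.commute)
        qed
        have k': "k = min b0 a0" using ab0 by (simp add: min.commute)
        have rf: "prev (inv_letter (g!j)) k = prev (inv_letter (g!j)) b0 \<and>
             (\<forall>b1. prev (inv_letter (g!j)) b0 = Some b1 \<longrightarrow> b1 < k)"
          by (rule right_first[OF _ k' mx]) (use a' \<open>a = a0\<close> in simp)
        have "L j = prev (inv_letter (g!j)) k" using L_step[of j] True by (simp add: L_def)
        moreover have "B j = prev (inv_letter (g!j)) b0" using B_step[OF jN] True ab0 by simp
        ultimately show ?thesis using rf by simp
      next
        case False
        then have ij: "Suc j < i0" using step by simp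
        then have LBj: "L (Suc j) = B (Suc j)" "\<forall>b. B (Suc j) = Some b \<longrightarrow> b < k"
          using step.IH by auto
        have "L j = B j" using L_step[of j] B_step[OF jN] step LBj by simp
        moreover have "\<forall>b. B j = Some b \<longrightarrow> b < k"
        proof (intro allI impI)
          fix b assume "B j = Some b"
          then obtain b' where "B (Suc j) = Some b'" "prev (inv_letter (g!j)) b' = Some b"
            using B_step[OF jN] by (auto split: option.splits)
          then show "b < k" using LBj P1 by fastforce
        qed
        ultimately show ?thesis by blast
      qed
      have "M j = B j"
      proof (cases "B j")
        case None thus ?thesis using a' by (simp add: M_def)
      next
        case (Some b)
        then have "b < k" using LB by blast
        then show ?thesis using Some a'(1) a(2) aa by (simp add: M_def)
      qed
      then show ?case using LB a' a aa by auto
    qed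
    have sub: "Iv k \<subseteq> {x. reduced x}" by (auto simp: Iv_char)
    have "T = lmult (take i0 g) (Iv k)"
    proof (intro set_eqI)
      fix z
      define c0 where "c0 = take i0 g"
      have mem: "z \<in> lmult c0 (Iv k) \<longleftrightarrow>
          reduced z \<and> emb k (foldr cons_red (ginv c0) z) \<noteq> None"
        using lmult_mem[OF sub] F1 by (auto simp: Iv_char)
      have "z \<in> T \<longleftrightarrow> z \<in> lmult c0 (Iv k)"
      proof (cases "reduced z")
        case False thus ?thesis using mem T_def by simp
      next
        case rz: True
        define i where "i = lcp z g"
        define y where "y = drop i z"
        have iN: "i \<le> N" using lcp_le2 N_def i_def by simp
        have zc: "z = take i g @ y"
        proof -
          have "z = take i z @ drop i z" by simp
          also have "take i z = take i g" unfolding i_def by (rule lcp_take)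
          finally show ?thesis by (simp add: y_def)
        qed
        have "emb k (foldr cons_red (ginv c0) z) \<noteq> None \<longleftrightarrow> (\<exists>p. M i = Some p \<and> emb p y \<noteq> None)"
        proof (cases "i0 \<le> i")
          case True
          define u where "u = drop i0 (take i g)"
          have "take i g = take i0 (take i g) @ u" unfolding u_def by (rule append_take_drop_id[symmetric])
          also have "take i0 (take i g) = c0" using True by (simp add: c0_def min_absorb1)
          finally have zz: "z = c0 @ (u @ y)" using zc by simp
          have "foldr cons_red (ginv c0) z = u @ y"
            using cancel_prefix[of c0 "u @ y"] rz zz by simp
          moreover have "emb k (u @ y) = (case R i of None \<Rightarrow> None | Some p \<Rightarrow> emb p y)"
            by (simp add: R_def u_def emb_append)
          moreover have "R i = M i" using Rc[OF True iN] by simp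
          ultimately show ?thesis by (auto split: option.splits)
        next
          case False
          then have ii0: "i < i0" by simp
          define u where "u = drop i (take i0 g)"
          have "c0 = take i (take i0 g) @ u" unfolding u_def c0_def by (rule append_take_drop_id[symmetric])
          also have "take i (take i0 g) = take i g" using ii0 by (simp add: min_absorb1)
          finally have cc: "c0 = take i g @ u" .
          have "foldr cons_red (ginv c0) z
              = foldr cons_red (ginv u) (foldr cons_red (ginv (take i g)) (take i g @ y))"
            using cc zc by simp
          also have "foldr cons_red (ginv (take i g)) (take i g @ y) = y"
            using cancel_prefix rz zc by simp
          also have "foldr cons_red (ginv u) y = ginv u @ y"
          proof (rule act_app)
            have ru: "reduced u" unfolding u_def using g reduced_take reduced_drop by blast
            have ry: "reduced y" unfolding y_def using rz reduced_drop by blast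
            have iNs: "i < N" using ii0 i0 by simp
            have un: "u \<noteq> []" unfolding u_def using ii0 i0 N_def by simp
            have hu: "hd u = g ! i" unfolding u_def using ii0 i0 N_def by (simp add: hd_drop_conv_nth)
            have "hd y \<noteq> g ! i" if "y \<noteq> []"
            proof -
              have "i < length z" using that y_def by simp
              then show ?thesis using lcp_nth[of z g] i_def y_def iNs N_def by (simp add: hd_drop_conv_nth)
            qed
            then show "reduced (ginv u @ y)"
              using reduced_ginv[OF ru] ry un hu last_ginv[OF un] by (auto simp: reduced_append)
          qed
          finally have "foldr cons_red (ginv c0) z = ginv u @ y" .
          moreover have "emb k (ginv u @ y) = (case L i of None \<Rightarrow> None | Some p \<Rightarrow> emb p y)"
            by (simp add: L_def u_def emb_append)
          moreover have "L i = M i" using Lc[of i] ii0 by simp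
          ultimately show ?thesis by (auto split: option.splits)
        qed
        then show ?thesis using mem key_T[OF rz] rz by (simp add: i_def y_def)
      qed
      then show "z \<in> T \<longleftrightarrow> z \<in> lmult (take i0 g) (Iv k)" by (simp add: c0_def)
    qed
    then show ?thesis using reduced_take[OF g] by blast
  qed
qed


theorem proposition2p6:
  assumes "I \<in> intervals" and "J \<in> intervals"
  shows "I \<inter> J \<in> intervals"
proof (cases "I = {} \<or> J = {}")
  case True thus ?thesis by (auto simp: intervals_def)
next
  case False
  then obtain w n v m where wv: "I = lmult w (Iv n)" "J = lmult v (Iv m)" "reduced w" "reduced v"
    using assms by (auto simp: intervals_def FG_def)
  define g where "g = normalize (ginv w @ v)"
  define T where "T = {z. reduced z \<and> emb n z \<noteq> None \<and> emb m (foldr cons_red (ginv g) z) \<noteq> None}"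
  have rg: "reduced g" by (simp add: g_def)
  have subI: "Iv j \<subseteq> {x. reduced x}" for j by (auto simp: Iv_char)
  have subT: "T \<subseteq> {x. reduced x}" by (auto simp: T_def)
  have IJ: "I \<inter> J = lmult w T"
  proof (intro set_eqI)
    fix x
    show "x \<in> I \<inter> J \<longleftrightarrow> x \<in> lmult w T"
    proof (cases "reduced x")
      case False thus ?thesis using wv lmult_mem[OF subI] lmult_mem[OF subT] by auto
    next
      case True
      define z where "z = foldr cons_red (ginv w) x"
      have rz: "reduced z" using True F1 z_def by simp
      have "foldr cons_red (ginv g) z = foldr cons_red (ginv (ginv w @ v)) z"
        unfolding g_def by (rule ginv_norm[OF rz])
      also have "\<dots> = foldr cons_red (ginv v) (foldr cons_red w z)" by simp
      also have "foldr cons_red w z = x" unfolding z_def by (rule F3'[OF True])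
      finally have e: "foldr cons_red (ginv g) z = foldr cons_red (ginv v) x" .
      show ?thesis
        using wv lmult_mem[OF subI] lmult_mem[OF subT] True rz e
        by (simp add: Iv_char T_def z_def[symmetric] F1)
    qed
  qed
  from main[OF rg, of n m] have "T = {} \<or> (\<exists>c k. reduced c \<and> T = lmult c (Iv k))"
    unfolding T_def .
  then show ?thesis
  proof
    assume "T = {}" thus ?thesis using IJ by (simp add: intervals_def lmult_def)
  next
    assume "\<exists>c k. reduced c \<and> T = lmult c (Iv k)"
    then obtain c k where "T = lmult c (Iv k)" by blast
    then have "I \<inter> J = lmult (normalize (w @ c)) (Iv k)" using IJ lmult_lmult by simp
    then show ?thesis unfolding intervals_def FG_def by auto
  qed
qed

end
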